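(* Let $X$ be a bounded subset of $\mathbb{R}^n$ and $\hat X$ a finite subset of $\mathbb{R}^n$. Let $v:X\to\mathbb{R}$ be Lipschitz continuous with constant $L_v$ with respect to the Euclidean norm, and let $a\geq L_v$. Let $\mathcal Z_{\hat X}$ be the complete semimodule of $\overline{\mathbb{R}}_{\max}^X$ generated by the functions $z_{\hat x}(x)=-a\|x-\hat x\|_1$ ($x\in X$), $\hat x\in\hat X$. Then \[ \|v-P^{-(\mathcal Z_{\hat X})}v\|_\infty\leq n(a+L_v)\rho_X(\hat X). \]
   Context: $\|x\|_1=\sum_i|x_i|$. $\rho_X(P)=\sup_{x\in X}\inf_{p\in P}\|x-p\|_2$. $P^{-(\mathcal Z_{\hat X})}v=\min\{g\in -\mathcal Z_{\hat X}: g\geq v\}$, explicitly $P^{-(\mathcal Z_{\hat X})}v(x)=\inf_{\hat x\in\hat X}\big(a\|x-\hat x\|_1+\sup_{y\in X}(-a\|y-\hat x\|_1+v(y))\big)$ for $x\in X$. $\|g\|_\infty=\sup_{x\in X}|g(x)|$. *)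

theory Defs
  imports "HOL-Analysis.Analysis"
begin

definition norm1 :: "real ^ 'n \<Rightarrow> real" where
  "norm1 x = (\<Sum>i\<in>UNIV. \<bar>x $ i\<bar>)"

definition covrad :: "(real ^ 'n) set \<Rightarrow> (real ^ 'n) set \<Rightarrow> real" where
  "covrad X P = (SUP x\<in>X. INF p\<in>P. dist x p)"

text \<open>The max-plus projection P^{-(Z_Xhat)} v onto the (negated) complete semimodule generated
  by z_xhat(x) = -a ||x - xhat||_1, given by its explicit formula, for x in X.\<close>
definition proj_minus :: "real \<Rightarrow> (real ^ 'n) set \<Rightarrow> (real ^ 'n) set \<Rightarrow> (real ^ 'n \<Rightarrow> real)
    \<Rightarrow> real ^ 'n \<Rightarrow> real" where
  "proj_minus a X Xh v x =
     (INF xh\<in>Xh. a * norm1 (x - xh) + (SUP y\<in>X. - a * norm1 (y - xh) + v y))"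

definition supnorm_on :: "(real ^ 'n) set \<Rightarrow> (real ^ 'n \<Rightarrow> real) \<Rightarrow> real" where
  "supnorm_on X g = (SUP x\<in>X. \<bar>g x\<bar>)"

end

theory Submission
  imports Defs
begin

lemma norm1_triangle: "norm1 (x + y) \<le> norm1 x + norm1 y"
  unfolding norm1_def by (simp add: sum.distrib[symmetric] sum_mono abs_triangle_ineq)

lemma norm1_commute: "norm1 (x - y) = norm1 (y - x)"
  unfolding norm1_def by (simp add: abs_minus_commute)

lemma norm_le_norm1: "norm x \<le> norm1 x"
  unfolding norm1_def by (rule norm_le_l1_cart)

lemma norm1_le_card: "norm1 (x :: real ^ 'n) \<le> real CARD('n) * norm x"
proof -
  have "norm1 x \<le> (\<Sum>i\<in>(UNIV::'n set). norm x)"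
    unfolding norm1_def by (rule sum_mono) (rule component_le_norm_cart)
  then show ?thesis by simp
qed

lemma norm1_tri3: "norm1 ((y::real^'n) - x) \<le> norm1 (y - xh) + norm1 (x - xh)"
proof -
  have "y - x = (y - xh) + (xh - x)" by simp
  then have "norm1 (y - x) \<le> norm1 (y - xh) + norm1 (xh - x)" by (metis norm1_triangle)
  then show ?thesis by (simp add: norm1_commute[of xh x])
qed

theorem lemma5p10:
  fixes X Xh :: "(real ^ 'n) set" and v :: "real ^ 'n \<Rightarrow> real" and Lv a :: real
  assumes "bounded X" and "X \<noteq> {}"
    and "finite Xh" and "Xh \<noteq> {}"
    and "Lv-lipschitz_on X v"
    and "a \<ge> Lv"
  shows "supnorm_on X (\<lambda>x. v x - proj_minus a X Xh v x)
           \<le> real CARD('n) * (a + Lv) * covrad X Xh"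
proof -
  have Lv0: "Lv \<ge> 0" and lip: "\<And>x y. x \<in> X \<Longrightarrow> y \<in> X \<Longrightarrow> dist (v x) (v y) \<le> Lv * dist x y"
    using assms(5) unfolding lipschitz_on_def by auto
  have a0: "a \<ge> 0" using Lv0 assms(6) by linarith
  define S where "S xh = (SUP y\<in>X. - a * norm1 (y - xh) + v y)" for xh
  define d where "d x = (INF p\<in>Xh. dist x p)" for x
  have pm: "proj_minus a X Xh v x = (INF xh\<in>Xh. a * norm1 (x - xh) + S xh)" for x
    unfolding proj_minus_def S_def by simp
  have term_le: "- a * norm1 (y - xh) + v y \<le> v x + Lv * norm1 (x - xh)"
    if x: "x \<in> X" and y: "y \<in> X" for x y xh
  proof -
    have "v y \<le> v x + Lv * dist y x"
      using lip[OF y x] by (simp add: dist_real_def)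
    also have "dist y x \<le> norm1 (y - x)" by (simp add: dist_norm norm_le_norm1)
    also have "norm1 (y - x) \<le> norm1 (y - xh) + norm1 (x - xh)" by (rule norm1_tri3)
    finally have "v y \<le> v x + Lv * (norm1 (y - xh) + norm1 (x - xh))"
      using Lv0 by (simp add: mult_left_mono)
    moreover have "Lv * norm1 (y - xh) \<le> a * norm1 (y - xh)"
      using assms(6) by (simp add: mult_right_mono norm1_def)
    ultimately show ?thesis by (simp add: algebra_simps)
  qed
  have bdd: "bdd_above ((\<lambda>y. - a * norm1 (y - xh) + v y) ` X)" for xh
  proof -
    obtain x where "x \<in> X" using assms(2) by blast
    then show ?thesis using term_le by (intro bdd_aboveI2) blast
  qed
  have S_ge: "S xh \<ge> - a * norm1 (x - xh) + v x" if "x \<in> X" for x xh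
    unfolding S_def using bdd that by (intro cSUP_upper) auto
  have S_le: "S xh \<le> v x + Lv * norm1 (x - xh)" if "x \<in> X" for x xh
    unfolding S_def using assms(2) term_le[OF that] by (intro cSUP_least) auto
  have bddd: "bdd_above (d ` X)"
  proof -
    obtain p0 where p0: "p0 \<in> Xh" using assms(4) by blast
    obtain B where B: "\<And>x. x \<in> X \<Longrightarrow> norm x \<le> B" using assms(1) bounded_iff by blast
    have "d x \<le> B + norm p0" if "x \<in> X" for x
    proof -
      have "d x \<le> dist x p0" unfolding d_def using assms(3) p0
        by (intro cINF_lower) (auto intro: bdd_below_finite)
      also have "\<dots> \<le> norm x + norm p0" by (simp add: dist_norm norm_triangle_ineq4)
      finally show ?thesis using B[OF that] by linarith
    qed
    then show ?thesis by (intro bdd_aboveI2) blast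
  qed
  have d_le: "d x \<le> covrad X Xh" if "x \<in> X" for x
    unfolding covrad_def d_def[symmetric] using bddd that by (intro cSUP_upper) auto
  have pt: "\<bar>v x - proj_minus a X Xh v x\<bar> \<le> real CARD('n) * (a + Lv) * covrad X Xh"
    if x: "x \<in> X" for x
  proof -
    have ge: "proj_minus a X Xh v x \<ge> v x"
      unfolding pm using assms(4) S_ge[OF x] by (intro cINF_greatest) (auto simp: algebra_simps)
    have "d x \<in> (\<lambda>p. dist x p) ` Xh"
      unfolding d_def using assms(3,4) by (simp add: cInf_eq_Min)
    then obtain xh where xh: "xh \<in> Xh" "dist x xh = d x" by auto
    have "proj_minus a X Xh v x \<le> a * norm1 (x - xh) + S xh"
      unfolding pm using assms(3) xh(1) by (intro cINF_lower) (auto intro: bdd_below_finite)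
    also have "\<dots> \<le> v x + (a + Lv) * norm1 (x - xh)"
      using S_le[OF x, of xh] by (simp add: algebra_simps)
    also have "(a + Lv) * norm1 (x - xh) \<le> (a + Lv) * (real CARD('n) * norm (x - xh))"
      using a0 Lv0 by (intro mult_left_mono norm1_le_card) auto
    also have "norm (x - xh) \<le> covrad X Xh" using d_le[OF x] xh(2) by (simp add: dist_norm)
    finally have "proj_minus a X Xh v x \<le> v x + (a + Lv) * (real CARD('n) * covrad X Xh)"
      using a0 Lv0 by (simp add: mult_left_mono)
    with ge show ?thesis by (simp add: algebra_simps)
  qed
  show ?thesis unfolding supnorm_on_def using assms(2) pt by (intro cSUP_least) auto
qed

end
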